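(* Fix $n\ge1$. The collection of all left Beth–Wocjan maximally entangled bases $\mathrm{LBW}(L,H)$, where $L$ ranges over Latin squares of order $n$ and $H$ over Hadamard matrices of order $n$, coincides with the collection of all quantum Latin square maximally entangled bases $B(Q,(H,H,\dots,H))$, where $Q$ ranges over Latin squares of order $n$ and $H$ over Hadamard matrices of order $n$ (the same Hadamard used for every index).
   Context: $\{\ket k\}_{k=0}^{n-1}$ is the computational basis of $\mathbb C^n$ and $\ket{k,p}=\ket k\otimes\ket p$. A quantum Latin square (QLS) of order $n$ is an $n\times n$ array of vectors of $\mathbb C^n$ in which every row and column is an orthonormal basis; the entry in column $i$, row $j$ is $\ket{Q_{ij}}$. A Latin square is a QLS whose entries are all computational basis states. A Hadamard matrix of order $n$ is an $n\times n$ complex matrix $H$ with $|H_{ij}|=1$ and $HH^\dagger=H^\dagger H=nI_n$. Given a QLS $Q$ and Hadamards $(H_j)_{j=0}^{n-1}$, $B(Q,(H_j))$ is the indexed family $A_{ij}=\frac1{\sqrt n}\sum_{k}\ket k\otimes\ket{Q_{kj}}\bra kH_j\ket i$, $i,j\in\{0,\dots,n-1\}$. Given a Latin square $L$ and a Hadamard $H$, $\mathrm{LBW}(L,H)$ is the indexed family $B_{ij}=\frac1{\sqrt n}\sum_{k,p=0}^{n-1}\ket{k,p}\,H_{ik}\,\langle L_{kp}|j\rangle$, $i,j\in\{0,\dots,n-1\}$. *)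

theory Defs
  imports Complex_Main
begin

text \<open>Vectors of C^n are represented as functions nat \<Rightarrow> complex vanishing at indices \<ge> n;
  vectors of C^n \<otimes> C^n as functions nat \<times> nat \<Rightarrow> complex, the value at (k,p) being the
  coefficient of |k,p>.  Matrices are functions nat \<Rightarrow> nat \<Rightarrow> complex (only entries
  with indices < n matter).\<close>

definition ket :: "nat \<Rightarrow> nat \<Rightarrow> complex" where
  "ket m = (\<lambda>p. if p = m then 1 else 0)"

definition in_Cn :: "nat \<Rightarrow> (nat \<Rightarrow> complex) \<Rightarrow> bool" where
  "in_Cn n v \<longleftrightarrow> (\<forall>p\<ge>n. v p = 0)"

definition cinner :: "nat \<Rightarrow> (nat \<Rightarrow> complex) \<Rightarrow> (nat \<Rightarrow> complex) \<Rightarrow> complex" where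
  "cinner n u v = (\<Sum>p<n. cnj (u p) * v p)"

text \<open>Q i j is the entry in column i, row j.  Every row and every column is an
  orthonormal basis of C^n (n orthonormal vectors of C^n).\<close>
definition QLS :: "nat \<Rightarrow> (nat \<Rightarrow> nat \<Rightarrow> nat \<Rightarrow> complex) \<Rightarrow> bool" where
  "QLS n Q \<longleftrightarrow>
     (\<forall>i<n. \<forall>j<n. in_Cn n (Q i j)) \<and>
     (\<forall>j<n. \<forall>i<n. \<forall>i'<n. cinner n (Q i j) (Q i' j) = (if i = i' then 1 else 0)) \<and>
     (\<forall>i<n. \<forall>j<n. \<forall>j'<n. cinner n (Q i j) (Q i j') = (if j = j' then 1 else 0))"

definition latin_square :: "nat \<Rightarrow> (nat \<Rightarrow> nat \<Rightarrow> nat \<Rightarrow> complex) \<Rightarrow> bool" where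
  "latin_square n L \<longleftrightarrow> QLS n L \<and> (\<forall>i<n. \<forall>j<n. \<exists>m<n. L i j = ket m)"

definition hadamard :: "nat \<Rightarrow> (nat \<Rightarrow> nat \<Rightarrow> complex) \<Rightarrow> bool" where
  "hadamard n H \<longleftrightarrow>
     (\<forall>i<n. \<forall>j<n. cmod (H i j) = 1) \<and>
     (\<forall>i<n. \<forall>j<n. (\<Sum>k<n. H i k * cnj (H j k)) = (if i = j then of_nat n else 0)) \<and>
     (\<forall>i<n. \<forall>j<n. (\<Sum>k<n. cnj (H k i) * H k j) = (if i = j then of_nat n else 0))"

text \<open>Indexed families (i,j < n) of vectors of C^n \<otimes> C^n; outside the index range the
  family is set to 0 so that families can be compared as functions.\<close>
type_synonym family = "nat \<Rightarrow> nat \<Rightarrow> (nat \<times> nat \<Rightarrow> complex)"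

text \<open>B(Q,(H_j)): A_ij = 1/sqrt n \<Sum>_k |k> \<otimes> |Q_kj> <k|H_j|i>.\<close>
definition QLS_basis :: "nat \<Rightarrow> (nat \<Rightarrow> nat \<Rightarrow> nat \<Rightarrow> complex) \<Rightarrow> (nat \<Rightarrow> nat \<Rightarrow> nat \<Rightarrow> complex) \<Rightarrow> family" where
  "QLS_basis n Q Hs = (\<lambda>i j (k, p).
     if i < n \<and> j < n \<and> k < n \<and> p < n
     then Hs j k i * Q k j p / complex_of_real (sqrt (real n)) else 0)"

text \<open>LBW(L,H): B_ij = 1/sqrt n \<Sum>_{k,p} |k,p> H_ik <L_kp|j>.\<close>
definition LBW :: "nat \<Rightarrow> (nat \<Rightarrow> nat \<Rightarrow> nat \<Rightarrow> complex) \<Rightarrow> (nat \<Rightarrow> nat \<Rightarrow> complex) \<Rightarrow> family" where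
  "LBW n L H = (\<lambda>i j (k, p).
     if i < n \<and> j < n \<and> k < n \<and> p < n
     then H i k * cnj (L k p j) / complex_of_real (sqrt (real n)) else 0)"

end

theory Submission
  imports Defs
begin

lemma ket_inj: "ket a = ket b \<longleftrightarrow> a = b"
  by (metis ket_def one_neq_zero)

lemma cinner_ket: assumes "a < n" "b < n" shows "cinner n (ket a) (ket b) = (if a = b then 1 else 0)"
proof -
  have "(\<lambda>p. cnj (ket a p) * ket b p) = (\<lambda>p. if p = a then (if a = b then 1 else 0) else 0)"
    by (auto simp: ket_def)
  thus ?thesis unfolding cinner_def using assms by (simp only:) simp
qed

lemma latin_iff_aux:
  assumes E: "\<forall>i<n. \<forall>j<n. \<exists>m<n. L i j = ket m"
    and I1: "\<forall>i<n. \<forall>j<n. \<forall>i'<n. L i j = L i' j \<longrightarrow> i = i'"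
    and I2: "\<forall>i<n. \<forall>j<n. \<forall>j'<n. L i j = L i j' \<longrightarrow> j = j'"
  shows "latin_square n L"
proof -
  have inC: "\<forall>i<n. \<forall>j<n. in_Cn n (L i j)"
  proof (intro allI impI)
    fix i j assume h: "i<n" "j<n"
    from E[rule_format, OF h] obtain m where m: "m<n" "L i j = ket m" by blast
    thus "in_Cn n (L i j)" unfolding in_Cn_def ket_def by auto
  qed
  have c1: "\<forall>j<n. \<forall>i<n. \<forall>i'<n. cinner n (L i j) (L i' j) = (if i = i' then 1 else 0)"
  proof (intro allI impI)
    fix j i i' assume h: "j<n" "i<n" "i'<n"
    from E[rule_format, OF h(2,1)] obtain m where m: "m<n" "L i j = ket m" by blast
    from E[rule_format, OF h(3,1)] obtain m' where m': "m'<n" "L i' j = ket m'" by blast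
    have "i = i' \<longleftrightarrow> m = m'"
    proof
      assume "i = i'" thus "m = m'" using m m' ket_inj by metis
    next
      assume "m = m'" hence "L i j = L i' j" using m m' by simp
      thus "i = i'" using I1[rule_format, OF h(2,1,3)] by simp
    qed
    thus "cinner n (L i j) (L i' j) = (if i = i' then 1 else 0)"
      using m m' cinner_ket[of m n m'] by simp
  qed
  have c2: "\<forall>i<n. \<forall>j<n. \<forall>j'<n. cinner n (L i j) (L i j') = (if j = j' then 1 else 0)"
  proof (intro allI impI)
    fix i j j' assume h: "i<n" "j<n" "j'<n"
    from E[rule_format, OF h(1,2)] obtain m where m: "m<n" "L i j = ket m" by blast
    from E[rule_format, OF h(1,3)] obtain m' where m': "m'<n" "L i j' = ket m'" by blast
    have "j = j' \<longleftrightarrow> m = m'"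
    proof
      assume "j = j'" thus "m = m'" using m m' ket_inj by metis
    next
      assume "m = m'" hence "L i j = L i j'" using m m' by simp
      thus "j = j'" using I2[rule_format, OF h(1,2,3)] by simp
    qed
    thus "cinner n (L i j) (L i j') = (if j = j' then 1 else 0)"
      using m m' cinner_ket[of m n m'] by simp
  qed
  have "QLS n L" unfolding QLS_def using inC c1 c2 by (intro conjI)
  thus ?thesis unfolding latin_square_def using E by (intro conjI)
qed

lemma latin_iff_dest:
  assumes L: "latin_square n L"
  shows "\<forall>i<n. \<forall>j<n. \<exists>m<n. L i j = ket m"
    and "\<forall>i<n. \<forall>j<n. \<forall>i'<n. L i j = L i' j \<longrightarrow> i = i'"
    and "\<forall>i<n. \<forall>j<n. \<forall>j'<n. L i j = L i j' \<longrightarrow> j = j'"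
proof -
  have Q: "QLS n L" and E: "\<forall>i<n. \<forall>j<n. \<exists>m<n. L i j = ket m"
    using L unfolding latin_square_def by (rule conjunct1, rule conjunct2)
  have C1: "\<forall>j<n. \<forall>i<n. \<forall>i'<n. cinner n (L i j) (L i' j) = (if i = i' then 1 else 0)"
    and C2: "\<forall>i<n. \<forall>j<n. \<forall>j'<n. cinner n (L i j) (L i j') = (if j = j' then 1 else 0)"
    using Q unfolding QLS_def by (metis (no_types))+
  show "\<forall>i<n. \<forall>j<n. \<exists>m<n. L i j = ket m" by (rule E)
  show "\<forall>i<n. \<forall>j<n. \<forall>i'<n. L i j = L i' j \<longrightarrow> i = i'"
  proof (intro allI impI)
    fix i j i' assume h: "i<n" "j<n" "i'<n" "L i j = L i' j"
    from E[rule_format, OF h(1,2)] obtain m where m: "m<n" "L i j = ket m" by blast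
    have "L i' j = ket m" using m h(4) by simp
    hence "cinner n (L i j) (L i' j) = 1" using cinner_ket[of m n m] m by simp
    moreover have "cinner n (L i j) (L i' j) = (if i = i' then 1 else 0)"
      using C1[rule_format, OF h(2,1,3)] .
    ultimately show "i = i'" by (metis zero_neq_one)
  qed
  show "\<forall>i<n. \<forall>j<n. \<forall>j'<n. L i j = L i j' \<longrightarrow> j = j'"
  proof (intro allI impI)
    fix i j j' assume h: "i<n" "j<n" "j'<n" "L i j = L i j'"
    from E[rule_format, OF h(1,2)] obtain m where m: "m<n" "L i j = ket m" by blast
    have "L i j' = ket m" using m h(4) by simp
    hence "cinner n (L i j) (L i j') = 1" using cinner_ket[of m n m] m by simp
    moreover have "cinner n (L i j) (L i j') = (if j = j' then 1 else 0)"
      using C2[rule_format, OF h(1,2,3)] .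
    ultimately show "j = j'" by (metis zero_neq_one)
  qed
qed

lemma latin_ex1:
  assumes L: "latin_square n X" and k: "k < n" and a: "a < n"
  shows "\<exists>!b. b < n \<and> X k b = ket a"
proof -
  note E = latin_iff_dest(1)[OF L] and I2 = latin_iff_dest(3)[OF L]
  have inj: "inj_on (X k) {..<n}"
    unfolding inj_on_def using I2[rule_format, OF k] by blast
  have sub: "X k ` {..<n} \<subseteq> ket ` {..<n}"
  proof
    fix y assume "y \<in> X k ` {..<n}"
    then obtain b where b: "b<n" "y = X k b" by blast
    from E[rule_format, OF k b(1)] obtain m where "m<n" "X k b = ket m" by blast
    thus "y \<in> ket ` {..<n}" using b by blast
  qed
  have "card (X k ` {..<n}) = n" using card_image[OF inj] by simp
  moreover have "card (ket ` {..<n}) \<le> n" using card_image_le[of "{..<n}" ket] by simp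
  ultimately have "X k ` {..<n} = ket ` {..<n}" using card_seteq[OF _ sub] by simp
  hence "\<exists>b<n. X k b = ket a" using a by (metis imageE imageI lessThan_iff)
  moreover have "\<And>b b'. b<n \<Longrightarrow> b'<n \<Longrightarrow> X k b = ket a \<Longrightarrow> X k b' = ket a \<Longrightarrow> b = b'"
    using I2[rule_format, OF k] by metis
  ultimately show ?thesis by blast
qed

definition invL :: "nat \<Rightarrow> (nat \<Rightarrow> nat \<Rightarrow> nat \<Rightarrow> complex) \<Rightarrow> nat \<Rightarrow> nat \<Rightarrow> nat \<Rightarrow> complex" where
  "invL n X k a = ket (THE b. b < n \<and> X k b = ket a)"

lemma invL_key:
  assumes L: "latin_square n X" and k: "k < n" and a: "a < n" and b: "b < n"
  shows "invL n X k a = ket b \<longleftrightarrow> X k b = ket a"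
proof -
  have t: "(THE b. b < n \<and> X k b = ket a) < n \<and> X k (THE b. b < n \<and> X k b = ket a) = ket a"
    using theI'[OF latin_ex1[OF L k a]] .
  show ?thesis
    unfolding invL_def ket_inj using latin_ex1[OF L k a] t b by blast
qed

lemma invL_ex:
  assumes L: "latin_square n X" and k: "k < n" and a: "a < n"
  shows "\<exists>b<n. invL n X k a = ket b"
proof -
  have "(THE b. b < n \<and> X k b = ket a) < n"
    using theI'[OF latin_ex1[OF L k a]] by blast
  thus ?thesis unfolding invL_def by blast
qed

lemma invL_latin:
  assumes L: "latin_square n X"
  shows "latin_square n (invL n X)"
proof (rule latin_iff_aux)
  note I1 = latin_iff_dest(2)[OF L]
  show "\<forall>i<n. \<forall>j<n. \<exists>m<n. invL n X i j = ket m" using invL_ex[OF L] by blast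
  show "\<forall>i<n. \<forall>j<n. \<forall>i'<n. invL n X i j = invL n X i' j \<longrightarrow> i = i'"
  proof (intro allI impI)
    fix i j i' assume h: "i<n" "j<n" "i'<n" "invL n X i j = invL n X i' j"
    obtain b where b: "b<n" "invL n X i j = ket b" using invL_ex[OF L h(1,2)] by blast
    have b': "invL n X i' j = ket b" using b h(4) by simp
    have "X i b = ket j" using invL_key[OF L h(1,2) b(1)] b(2) by simp
    moreover have "X i' b = ket j" using invL_key[OF L h(3,2) b(1)] b' by simp
    ultimately show "i = i'" using I1[rule_format, OF h(1) b(1) h(3)] by simp
  qed
  show "\<forall>i<n. \<forall>j<n. \<forall>j'<n. invL n X i j = invL n X i j' \<longrightarrow> j = j'"
  proof (intro allI impI)
    fix i j j' assume h: "i<n" "j<n" "j'<n" "invL n X i j = invL n X i j'"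
    obtain b where b: "b<n" "invL n X i j = ket b" using invL_ex[OF L h(1,2)] by blast
    have b': "invL n X i j' = ket b" using b h(4) by simp
    have "X i b = ket j" using invL_key[OF L h(1,2) b(1)] b(2) by simp
    moreover have "X i b = ket j'" using invL_key[OF L h(1,3) b(1)] b' by simp
    ultimately show "j = j'" using ket_inj by metis
  qed
qed

lemma hadamard_T: "hadamard n H \<Longrightarrow> hadamard n (\<lambda>a b. H b a)"
  unfolding hadamard_def by (auto simp: mult.commute)

lemma latin_entry:
  assumes L: "latin_square n X" and "k<n" "b<n" "a<n"
  shows "X k b a = (if X k b = ket a then 1 else 0)"
proof -
  obtain m where "m<n" "X k b = ket m" using latin_iff_dest(1)[OF L] assms(2,3) by blast
  thus ?thesis using ket_inj[of m a] by (simp add: ket_def)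
qed

theorem lemma24:
  fixes n :: nat
  assumes "n \<ge> 1"
  shows "{LBW n L H | L H. latin_square n L \<and> hadamard n H}
       = {QLS_basis n Q (\<lambda>_. H) | Q H. latin_square n Q \<and> hadamard n H}"
proof (intro equalityI subsetI)
  fix x assume "x \<in> {LBW n L H | L H. latin_square n L \<and> hadamard n H}"
  then obtain L H where x: "x = LBW n L H" and L: "latin_square n L" and H: "hadamard n H" by blast
  have "LBW n L H = QLS_basis n (invL n L) (\<lambda>_. (\<lambda>a b. H b a))"
  proof (intro ext, clarify)
    fix i j k p
    show "LBW n L H i j (k, p) = QLS_basis n (invL n L) (\<lambda>_. (\<lambda>a b. H b a)) i j (k, p)"
    proof (cases "i < n \<and> j < n \<and> k < n \<and> p < n")
      case True
      have "cnj (L k p j) = invL n L k j p"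
        using latin_entry[OF L, of k p j] latin_entry[OF invL_latin[OF L], of k j p]
          invL_key[OF L, of k j p] True by auto
      thus ?thesis using True unfolding LBW_def QLS_basis_def by simp
    qed (auto simp: LBW_def QLS_basis_def)
  qed
  thus "x \<in> {QLS_basis n Q (\<lambda>_. H) | Q H. latin_square n Q \<and> hadamard n H}"
    using x invL_latin[OF L] hadamard_T[OF H] by blast
next
  fix x assume "x \<in> {QLS_basis n Q (\<lambda>_. H) | Q H. latin_square n Q \<and> hadamard n H}"
  then obtain Q H where x: "x = QLS_basis n Q (\<lambda>_. H)" and Q: "latin_square n Q" and H: "hadamard n H" by blast
  have "QLS_basis n Q (\<lambda>_. H) = LBW n (invL n Q) (\<lambda>a b. H b a)"
  proof (intro ext, clarify)
    fix i j k p
    show "QLS_basis n Q (\<lambda>_. H) i j (k, p) = LBW n (invL n Q) (\<lambda>a b. H b a) i j (k, p)"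
    proof (cases "i < n \<and> j < n \<and> k < n \<and> p < n")
      case True
      have "Q k j p = cnj (invL n Q k p j)"
        using latin_entry[OF Q, of k j p] latin_entry[OF invL_latin[OF Q], of k p j]
          invL_key[OF Q, of k p j] True by auto
      thus ?thesis using True unfolding LBW_def QLS_basis_def by simp
    qed (auto simp: LBW_def QLS_basis_def)
  qed
  thus "x \<in> {LBW n L H | L H. latin_square n L \<and> hadamard n H}"
    using x invL_latin[OF Q] hadamard_T[OF H] by blast
qed

end
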